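(* Let $\mathcal A=\mathcal A_1\times\cdots\times\mathcal A_m$ be a finite tree multi-algebra, let $\mathtt A$ be a plenary anti-tree structure of $\mathcal A$, and let $B$ be a basic relation of $\mathcal A$. If $B_\ell\subseteq\Rsh_k^\ell B_k$ for all distinct $k,\ell$ such that $k\to\ell$ is an edge of $\mathtt A$, then $B$ is closed under projection, i.e. $B_j\subseteq\Rsh_i^jB_i$ for all distinct $i,j\in\{1,\dots,m\}$.
   Context: A finite non-associative algebra is a tuple $(\mathcal A,\cup,\neg,\emptyset,\mathcal B,\diamond,\overline{\cdot},e)$ where $(\mathcal A,\cup,\neg,\emptyset,\mathcal B)$ is a finite Boolean algebra and for all $x,y,z$: $\overline{\overline x}=x$, $\overline{x\cup y}=\overline x\cup\overline y$, $\overline{x\diamond y}=\overline y\diamond\overline x$, $e\diamond x=x\diamond e=x$, $x\diamond(y\cup z)=(x\diamond y)\cup(x\diamond z)$, $(x\diamond y)\cap\overline z=\emptyset\iff(y\diamond z)\cap\overline x=\emptyset$. $r\subseteq r'$ means $r\cup r'=r'$; atoms are basic relations; $\mathsf B_i$ is the set of atoms of $\mathcal A_i$. A projection operator from $\mathcal A$ to $\mathcal A'$ is a map $\Rsh$ with $\Rsh(r\cup r')=\Rsh r\cup\Rsh r'$ and $\Rsh\overline r=\overline{\Rsh r}$. A finite multi-algebra is a product $\mathcal A_1\times\cdots\times\mathcal A_m$ of finite non-associative algebras with projection operators $\Rsh_i^j:\mathcal A_i\to\mathcal A_j$ for all distinct $i,j$. A relation $R=(R_1,\dots,R_m)$ is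 basic if all $R_i$ are atoms; it is closed under projection if $R_j\subseteq\Rsh_i^jR_i$ for all distinct $i,j$. The inverse projection $\check\Rsh_i^j:\mathcal A_j\to\mathcal A_i$ of $\Rsh_i^j$ is the projection operator defined by: for all $b\in\mathsf B_i$, $b'\in\mathsf B_j$, $b\subseteq\check\Rsh_i^jb'\iff b'\subseteq\Rsh_i^jb$. An anti-tree structure on a set $V$ is a directed graph $(V,E)$ with a root $r\in V$ such that every $v\neq r$ has exactly one directed path from $v$ to $r$; write $v\to v'$ for $(v,v')\in E$. A plenary anti-tree structure of $\mathcal A$ is an anti-tree structure $\mathtt A$ on $\{1,\dots,m\}$ such that for all distinct $i,j$, letting $i=k_0\to\cdots\to k_s\leftarrow\cdots\leftarrow k_{s+t+1}=j$ be the shortest oriented chain between $i$ and $j$ in $\mathtt A$, every $b\in\mathsf B_i$ satisfies $\Rsh_i^jb\supseteq\check\Rsh_j^{k_{s+t}}\cdots\check\Rsh_{k_{s+1}}^{k_s}\Rsh_{k_{s-1}}^{k_s}\cdots\Rsh_i^{k_1}b$ (compositions of maps). $\mathcal A$ is a tree multi-algebra if it has a plenary anti-tree structure. *)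

theory Defs
  imports Main
begin

record 'a nalg =
  ncar  :: "'a set"
  njoin :: "'a \<Rightarrow> 'a \<Rightarrow> 'a"
  nneg  :: "'a \<Rightarrow> 'a"
  nbot  :: 'a
  ntop  :: 'a
  ncomp :: "'a \<Rightarrow> 'a \<Rightarrow> 'a"
  nconv :: "'a \<Rightarrow> 'a"
  nid   :: 'a

definition nmeet :: "'a nalg \<Rightarrow> 'a \<Rightarrow> 'a \<Rightarrow> 'a" where
  "nmeet A x y = nneg A (njoin A (nneg A x) (nneg A y))"

definition nle :: "'a nalg \<Rightarrow> 'a \<Rightarrow> 'a \<Rightarrow> bool" where
  "nle A x y \<longleftrightarrow> njoin A x y = y"

definition finite_boolean_algebra :: "'a nalg \<Rightarrow> bool" where
  "finite_boolean_algebra A \<longleftrightarrow>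
     finite (ncar A) \<and>
     nbot A \<in> ncar A \<and> ntop A \<in> ncar A \<and>
     (\<forall>x\<in>ncar A. \<forall>y\<in>ncar A. njoin A x y \<in> ncar A) \<and>
     (\<forall>x\<in>ncar A. nneg A x \<in> ncar A) \<and>
     (\<forall>x\<in>ncar A. \<forall>y\<in>ncar A. njoin A x y = njoin A y x) \<and>
     (\<forall>x\<in>ncar A. \<forall>y\<in>ncar A. nmeet A x y = nmeet A y x) \<and>
     (\<forall>x\<in>ncar A. \<forall>y\<in>ncar A. \<forall>z\<in>ncar A.
        njoin A x (njoin A y z) = njoin A (njoin A x y) z) \<and>
     (\<forall>x\<in>ncar A. \<forall>y\<in>ncar A. \<forall>z\<in>ncar A.
        nmeet A x (nmeet A y z) = nmeet A (nmeet A x y) z) \<and>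
     (\<forall>x\<in>ncar A. \<forall>y\<in>ncar A. njoin A x (nmeet A x y) = x) \<and>
     (\<forall>x\<in>ncar A. \<forall>y\<in>ncar A. nmeet A x (njoin A x y) = x) \<and>
     (\<forall>x\<in>ncar A. \<forall>y\<in>ncar A. \<forall>z\<in>ncar A.
        njoin A x (nmeet A y z) = nmeet A (njoin A x y) (njoin A x z)) \<and>
     (\<forall>x\<in>ncar A. \<forall>y\<in>ncar A. \<forall>z\<in>ncar A.
        nmeet A x (njoin A y z) = njoin A (nmeet A x y) (nmeet A x z)) \<and>
     (\<forall>x\<in>ncar A. njoin A x (nbot A) = x) \<and>
     (\<forall>x\<in>ncar A. nmeet A x (ntop A) = x) \<and>
     (\<forall>x\<in>ncar A. njoin A x (nneg A x) = ntop A) \<and>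
     (\<forall>x\<in>ncar A. nmeet A x (nneg A x) = nbot A)"

definition na_algebra :: "'a nalg \<Rightarrow> bool" where
  "na_algebra A \<longleftrightarrow>
     finite_boolean_algebra A \<and>
     nid A \<in> ncar A \<and>
     (\<forall>x\<in>ncar A. nconv A x \<in> ncar A) \<and>
     (\<forall>x\<in>ncar A. \<forall>y\<in>ncar A. ncomp A x y \<in> ncar A) \<and>
     (\<forall>x\<in>ncar A. nconv A (nconv A x) = x) \<and>
     (\<forall>x\<in>ncar A. \<forall>y\<in>ncar A. nconv A (njoin A x y) = njoin A (nconv A x) (nconv A y)) \<and>
     (\<forall>x\<in>ncar A. \<forall>y\<in>ncar A. nconv A (ncomp A x y) = ncomp A (nconv A y) (nconv A x)) \<and>
     (\<forall>x\<in>ncar A. ncomp A (nid A) x = x \<and> ncomp A x (nid A) = x) \<and>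
     (\<forall>x\<in>ncar A. \<forall>y\<in>ncar A. \<forall>z\<in>ncar A.
        ncomp A x (njoin A y z) = njoin A (ncomp A x y) (ncomp A x z)) \<and>
     (\<forall>x\<in>ncar A. \<forall>y\<in>ncar A. \<forall>z\<in>ncar A.
        (nmeet A (ncomp A x y) (nconv A z) = nbot A) \<longleftrightarrow>
        (nmeet A (ncomp A y z) (nconv A x) = nbot A))"

definition natoms :: "'a nalg \<Rightarrow> 'a set" where
  "natoms A = {b \<in> ncar A. b \<noteq> nbot A \<and>
                 (\<forall>y\<in>ncar A. nle A y b \<longrightarrow> y = nbot A \<or> y = b)}"

definition proj_op :: "'a nalg \<Rightarrow> 'a nalg \<Rightarrow> ('a \<Rightarrow> 'a) \<Rightarrow> bool" where
  "proj_op A A' f \<longleftrightarrow>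
     (\<forall>x\<in>ncar A. f x \<in> ncar A') \<and>
     (\<forall>x\<in>ncar A. \<forall>y\<in>ncar A. f (njoin A x y) = njoin A' (f x) (f y)) \<and>
     (\<forall>x\<in>ncar A. f (nconv A x) = nconv A' (f x))"

definition multi_algebra :: "nat \<Rightarrow> (nat \<Rightarrow> 'a nalg) \<Rightarrow> (nat \<Rightarrow> nat \<Rightarrow> 'a \<Rightarrow> 'a) \<Rightarrow> bool" where
  "multi_algebra m A P \<longleftrightarrow>
     (\<forall>i\<in>{1..m}. na_algebra (A i)) \<and>
     (\<forall>i\<in>{1..m}. \<forall>j\<in>{1..m}. i \<noteq> j \<longrightarrow> proj_op (A i) (A j) (P i j))"

definition basic_rel :: "nat \<Rightarrow> (nat \<Rightarrow> 'a nalg) \<Rightarrow> (nat \<Rightarrow> 'a) \<Rightarrow> bool" where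
  "basic_rel m A R \<longleftrightarrow> (\<forall>i\<in>{1..m}. R i \<in> natoms (A i))"

definition closed_under_projection ::
  "nat \<Rightarrow> (nat \<Rightarrow> 'a nalg) \<Rightarrow> (nat \<Rightarrow> nat \<Rightarrow> 'a \<Rightarrow> 'a) \<Rightarrow> (nat \<Rightarrow> 'a) \<Rightarrow> bool" where
  "closed_under_projection m A P R \<longleftrightarrow>
     (\<forall>i\<in>{1..m}. \<forall>j\<in>{1..m}. i \<noteq> j \<longrightarrow> nle (A j) (R j) (P i j (R i)))"

definition inverse_proj :: "'a nalg \<Rightarrow> 'a nalg \<Rightarrow> ('a \<Rightarrow> 'a) \<Rightarrow> ('a \<Rightarrow> 'a) \<Rightarrow> bool" where
  "inverse_proj Ai Aj f Q \<longleftrightarrow>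
     proj_op Aj Ai Q \<and>
     (\<forall>b\<in>natoms Ai. \<forall>b'\<in>natoms Aj. nle Ai b (Q b') \<longleftrightarrow> nle Aj b' (f b))"

definition dpath :: "(nat \<times> nat) set \<Rightarrow> nat \<Rightarrow> nat \<Rightarrow> nat list \<Rightarrow> bool" where
  "dpath E v w ps \<longleftrightarrow> ps \<noteq> [] \<and> hd ps = v \<and> last ps = w \<and> distinct ps \<and>
     (\<forall>p. p + 1 < length ps \<longrightarrow> (ps ! p, ps ! (p + 1)) \<in> E)"

definition anti_tree :: "nat set \<Rightarrow> (nat \<times> nat) set \<Rightarrow> nat \<Rightarrow> bool" where
  "anti_tree V E r \<longleftrightarrow> E \<subseteq> V \<times> V \<and> r \<in> V \<and>
     (\<forall>v\<in>V. v \<noteq> r \<longrightarrow> (\<exists>!ps. dpath E v r ps))"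

text \<open>Oriented chain i = k_0 \<rightarrow> ... \<rightarrow> k_s \<leftarrow> ... \<leftarrow> k_n = j, given as the list
  ks = [k_0, ..., k_n] together with the index s of the top vertex.\<close>
definition oriented_chain :: "(nat \<times> nat) set \<Rightarrow> nat \<Rightarrow> nat \<Rightarrow> nat list \<Rightarrow> nat \<Rightarrow> bool" where
  "oriented_chain E i j ks s \<longleftrightarrow> ks \<noteq> [] \<and> ks ! 0 = i \<and> last ks = j \<and> s < length ks \<and>
     (\<forall>p<s. (ks ! p, ks ! (p + 1)) \<in> E) \<and>
     (\<forall>p. s \<le> p \<and> p + 1 < length ks \<longrightarrow> (ks ! (p + 1), ks ! p) \<in> E)"

definition shortest_oriented_chain :: "(nat \<times> nat) set \<Rightarrow> nat \<Rightarrow> nat \<Rightarrow> nat list \<Rightarrow> nat \<Rightarrow> bool" where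
  "shortest_oriented_chain E i j ks s \<longleftrightarrow> oriented_chain E i j ks s \<and>
     (\<forall>ks' s'. oriented_chain E i j ks' s' \<longrightarrow> length ks \<le> length ks')"

text \<open>The composite map
  Q k_n k_{n-1} \<circ> ... \<circ> Q k_{s+1} k_s \<circ> P k_{s-1} k_s \<circ> ... \<circ> P k_0 k_1,
  where Q i j denotes the inverse projection of P i j.\<close>
definition chain_map ::
  "(nat \<Rightarrow> nat \<Rightarrow> 'a \<Rightarrow> 'a) \<Rightarrow> (nat \<Rightarrow> nat \<Rightarrow> 'a \<Rightarrow> 'a) \<Rightarrow> nat list \<Rightarrow> nat \<Rightarrow> 'a \<Rightarrow> 'a" where
  "chain_map P Q ks s x =
     foldl (\<lambda>y p. if p < s then P (ks ! p) (ks ! (p + 1)) y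
                  else Q (ks ! (p + 1)) (ks ! p) y) x [0..<length ks - 1]"

definition plenary_anti_tree ::
  "nat \<Rightarrow> (nat \<Rightarrow> 'a nalg) \<Rightarrow> (nat \<Rightarrow> nat \<Rightarrow> 'a \<Rightarrow> 'a) \<Rightarrow> (nat \<times> nat) set \<Rightarrow> nat \<Rightarrow> bool" where
  "plenary_anti_tree m A P E r \<longleftrightarrow>
     anti_tree {1..m} E r \<and>
     (\<exists>Q. (\<forall>i\<in>{1..m}. \<forall>j\<in>{1..m}. i \<noteq> j \<longrightarrow> inverse_proj (A i) (A j) (P i j) (Q i j)) \<and>
          (\<forall>i\<in>{1..m}. \<forall>j\<in>{1..m}. i \<noteq> j \<longrightarrow>
             (\<forall>ks s. shortest_oriented_chain E i j ks s \<longrightarrow>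
                (\<forall>b\<in>natoms (A i). nle (A j) (chain_map P Q ks s b) (P i j b)))))"

definition tree_multi_algebra ::
  "nat \<Rightarrow> (nat \<Rightarrow> 'a nalg) \<Rightarrow> (nat \<Rightarrow> nat \<Rightarrow> 'a \<Rightarrow> 'a) \<Rightarrow> bool" where
  "tree_multi_algebra m A P \<longleftrightarrow> multi_algebra m A P \<and> (\<exists>E r. plenary_anti_tree m A P E r)"

end

theory Submission
  imports Defs
begin

lemma nle_trans:
  assumes "finite_boolean_algebra A" "x \<in> ncar A" "y \<in> ncar A" "z \<in> ncar A"
    "nle A x y" "nle A y z"
  shows "nle A x z"
proof -
  have "njoin A x z = njoin A x (njoin A y z)" using assms(6) by (simp add: nle_def)
  also have "\<dots> = njoin A (njoin A x y) z" using assms(1-4) unfolding finite_boolean_algebra_def by blast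
  also have "\<dots> = z" using assms(5,6) by (simp add: nle_def)
  finally show ?thesis by (simp add: nle_def)
qed

lemma proj_mono:
  assumes "proj_op A A' f" "x \<in> ncar A" "y \<in> ncar A" "nle A x y"
  shows "nle A' (f x) (f y)"
proof -
  have "f y = f (njoin A x y)" using assms(4) by (simp add: nle_def)
  also have "\<dots> = njoin A' (f x) (f y)" using assms(1-3) unfolding proj_op_def by blast
  finally show ?thesis by (simp add: nle_def)
qed

lemma oc_prepend:
  assumes "oriented_chain E i j ks s" "(i', i) \<in> E"
  shows "oriented_chain E i' j (i' # ks) (Suc s)"
  unfolding oriented_chain_def
proof (intro conjI allI impI)
  show "(i' # ks) ! 0 = i'" by simp
  show "last (i' # ks) = j" using assms(1) by (simp add: oriented_chain_def)
  show "Suc s < length (i' # ks)" using assms(1) by (simp add: oriented_chain_def)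
  show "i' # ks \<noteq> []" by simp
  fix p assume "p < Suc s"
  then show "((i' # ks) ! p, (i' # ks) ! (p + 1)) \<in> E"
    using assms unfolding oriented_chain_def by (cases p) auto
next
  fix p assume "Suc s \<le> p \<and> p + 1 < length (i' # ks)"
  then show "((i' # ks) ! (p + 1), (i' # ks) ! p) \<in> E"
    using assms unfolding oriented_chain_def by (cases p) auto
qed

lemma oc_append:
  assumes "oriented_chain E i j ks s" "(j', j) \<in> E"
  shows "oriented_chain E i j' (ks @ [j']) s"
  unfolding oriented_chain_def
proof (intro conjI allI impI)
  have ne: "ks \<noteq> []" and s: "s < length ks" and l: "last ks = j" and h: "ks ! 0 = i"
    using assms(1) by (auto simp: oriented_chain_def)
  show "(ks @ [j']) ! 0 = i" using ne h by (simp add: nth_append)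
  show "last (ks @ [j']) = j'" by simp
  show "s < length (ks @ [j'])" using s by simp
  show "ks @ [j'] \<noteq> []" by simp
  fix p assume "p < s"
  then show "((ks @ [j']) ! p, (ks @ [j']) ! (p + 1)) \<in> E"
    using assms s unfolding oriented_chain_def by (simp add: nth_append)
next
  have ne: "ks \<noteq> []" and s: "s < length ks" and l: "last ks = j"
    using assms(1) by (auto simp: oriented_chain_def)
  fix p assume p: "s \<le> p \<and> p + 1 < length (ks @ [j'])"
  show "((ks @ [j']) ! (p + 1), (ks @ [j']) ! p) \<in> E"
  proof (cases "p + 1 < length ks")
    case True
    then show ?thesis using assms p unfolding oriented_chain_def by (simp add: nth_append)
  next
    case False
    then have "p = length ks - 1" using p by simp linarith
    then show ?thesis using assms(2) ne l by (simp add: nth_append last_conv_nth)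
  qed
qed

lemma path_rtrancl:
  "ps \<noteq> [] \<Longrightarrow> (\<forall>p. p + 1 < length ps \<longrightarrow> (ps ! p, ps ! (p + 1)) \<in> E) \<Longrightarrow> (hd ps, last ps) \<in> E\<^sup>*"
proof (induction ps)
  case Nil then show ?case by simp
next
  case (Cons a ps)
  show ?case
  proof (cases "ps = []")
    case True then show ?thesis by simp
  next
    case False
    have "\<forall>p. p + 1 < length ps \<longrightarrow> (ps ! p, ps ! (p + 1)) \<in> E"
      using Cons.prems(2) by (metis Suc_eq_plus1 length_Cons nth_Cons_Suc Suc_less_eq)
    then have "(hd ps, last ps) \<in> E\<^sup>*" using Cons.IH False by blast
    moreover have "(a, hd ps) \<in> E" using Cons.prems(2)[rule_format, of 0] False
      by (simp add: hd_conv_nth)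
    ultimately show ?thesis using False by (simp add: converse_rtrancl_into_rtrancl)
  qed
qed

lemma down_chain: "(j, r) \<in> E\<^sup>* \<Longrightarrow> \<exists>ks. oriented_chain E r j ks 0"
proof (induction rule: converse_rtrancl_induct)
  case base
  have "oriented_chain E r r [r] 0" by (simp add: oriented_chain_def)
  then show ?case by blast
next
  case (step y z)
  then obtain ks where "oriented_chain E r z ks 0" by blast
  then show ?case using oc_append step(1) by blast
qed

lemma up_chain: "(i, r) \<in> E\<^sup>* \<Longrightarrow> oriented_chain E r j ks 0 \<Longrightarrow> \<exists>ks s. oriented_chain E i j ks s"
proof (induction arbitrary: rule: converse_rtrancl_induct)
  case base then show ?case by blast
next
  case (step y z)
  then obtain ks s where "oriented_chain E z j ks s" by blast
  then show ?case using oc_prepend step(1) by blast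
qed


lemma shortest_no_dup:
  assumes sh: "shortest_oriented_chain E i j ks s" and p: "p + 1 < length ks"
  shows "ks ! p \<noteq> ks ! (p + 1)"
proof
  assume eq: "ks ! p = ks ! (p + 1)"
  have oc: "oriented_chain E i j ks s" using sh by (simp add: shortest_oriented_chain_def)
  define ks' where "ks' = take (Suc p) ks @ drop (Suc (Suc p)) ks"
  define s' where "s' = (if p < s then s - 1 else s)"
  have len: "length ks' = length ks - 1" using p by (simp add: ks'_def)
  have nth': "ks' ! q = ks ! (if q < p then q else Suc q)" if "q < length ks - 1" for q
  proof (cases "q \<le> p")
    case True
    then have "ks' ! q = ks ! q" using p by (simp add: ks'_def nth_append)
    then show ?thesis using True eq by (cases "q = p") auto
  next
    case False
    then have "ks' ! q = ks ! Suc q" using p that by (simp add: ks'_def nth_append min_def)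
    then show ?thesis using False by simp
  qed
  have up: "\<forall>q<s. (ks ! q, ks ! (q + 1)) \<in> E" and dn: "\<forall>q. s \<le> q \<and> q + 1 < length ks \<longrightarrow> (ks ! (q + 1), ks ! q) \<in> E"
    and s: "s < length ks" and h: "ks ! 0 = i" and l: "last ks = j" and ne: "ks \<noteq> []"
    using oc by (auto simp: oriented_chain_def)
  have "oriented_chain E i j ks' s'"
    unfolding oriented_chain_def
  proof (intro conjI allI impI)
    show "ks' \<noteq> []" using len p by auto
    show "ks' ! 0 = i" using nth'[of 0] p h eq by (cases "p = 0") auto
    have "\<not> (length ks - 2 < p)" "Suc (length ks - 2) = length ks - 1" "length ks - 2 < length ks - 1"
      using p by auto
    then have "ks' ! (length ks - 2) = ks ! (length ks - 1)" using nth'[of "length ks - 2"] by simp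
    moreover have "length ks' - 1 = length ks - 2" using len by simp
    ultimately show "last ks' = j" using \<open>ks' \<noteq> []\<close> l ne
      by (simp add: last_conv_nth)
    show "s' < length ks'" using s p len by (auto simp: s'_def)
  next
    fix q assume q: "q < s'"
    then have q1: "q + 1 < length ks - 1" using s p by (auto simp: s'_def split: if_splits)
    show "(ks' ! q, ks' ! (q + 1)) \<in> E"
    proof -
      consider "q + 1 < p" | "q + 1 = p" | "p \<le> q" by linarith
      then show ?thesis
      proof cases
        case 1
        then have "ks' ! q = ks ! q" "ks' ! (q+1) = ks ! (q+1)" "q < s"
          using nth'[of q] nth'[of "q+1"] q1 q by (auto simp: s'_def split: if_splits)
        then show ?thesis using up by simp
      next
        case 2
        then have "ks' ! q = ks ! q" "ks' ! (q+1) = ks ! (q+1)" "q < s"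
          using nth'[of q] nth'[of "q+1"] q1 q eq by (auto simp: s'_def split: if_splits)
        then show ?thesis using up by simp
      next
        case 3
        then have "ks' ! q = ks ! (q+1)" "ks' ! (q+1) = ks ! (q+1+1)" "q + 1 < s"
          using nth'[of q] nth'[of "q+1"] q1 q by (auto simp: s'_def split: if_splits)
        then show ?thesis using up by simp
      qed
    qed
  next
    fix q assume q: "s' \<le> q \<and> q + 1 < length ks'"
    then have q1: "q + 1 < length ks - 1" using len by simp
    show "(ks' ! (q + 1), ks' ! q) \<in> E"
    proof -
      consider "q + 1 < p" | "q + 1 = p" | "p \<le> q" by linarith
      then show ?thesis
      proof cases
        case 1
        then have "ks' ! q = ks ! q" "ks' ! (q+1) = ks ! (q+1)" "s \<le> q"
          using nth'[of q] nth'[of "q+1"] q1 q by (auto simp: s'_def split: if_splits)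
        then show ?thesis using dn q1 by simp
      next
        case 2
        then have "ks' ! q = ks ! q" "ks' ! (q+1) = ks ! (q+1)" "s \<le> q"
          using nth'[of q] nth'[of "q+1"] q1 q eq by (auto simp: s'_def split: if_splits)
        then show ?thesis using dn q1 by simp
      next
        case 3
        then have "ks' ! q = ks ! (q+1)" "ks' ! (q+1) = ks ! (q+1+1)" "s \<le> q + 1"
          using nth'[of q] nth'[of "q+1"] q1 q by (auto simp: s'_def split: if_splits)
        then show ?thesis using dn q1 by simp
      qed
    qed
  qed
  then have "length ks \<le> length ks'" using sh by (auto simp: shortest_oriented_chain_def)
  then show False using len p by simp
qed


lemma nle_refl:
  assumes "finite_boolean_algebra A" "x \<in> ncar A"
  shows "nle A x x"
proof -
  have cl: "\<forall>x\<in>ncar A. \<forall>y\<in>ncar A. njoin A x y \<in> ncar A"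
    and ab1: "\<forall>x\<in>ncar A. \<forall>y\<in>ncar A. njoin A x (nmeet A x y) = x"
    and ab2: "\<forall>x\<in>ncar A. \<forall>y\<in>ncar A. nmeet A x (njoin A x y) = x"
    using assms(1) unfolding finite_boolean_algebra_def by simp_all
  have jc: "njoin A x x \<in> ncar A" using cl assms(2) by blast
  have "nmeet A x (njoin A x x) = x" using ab2 assms(2) jc by blast
  moreover have "njoin A x (nmeet A x (njoin A x x)) = x" using ab1 assms(2) jc by blast
  ultimately show ?thesis by (simp add: nle_def)
qed

lemma atom_car: "b \<in> natoms A \<Longrightarrow> b \<in> ncar A"
  by (simp add: natoms_def)

theorem lemma5p11:
  fixes m :: nat and A :: "nat \<Rightarrow> 'a nalg" and P :: "nat \<Rightarrow> nat \<Rightarrow> 'a \<Rightarrow> 'a"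
    and E :: "(nat \<times> nat) set" and r :: nat and B :: "nat \<Rightarrow> 'a"
  assumes "tree_multi_algebra m A P"
    and "plenary_anti_tree m A P E r"
    and "basic_rel m A B"
    and "\<forall>k\<in>{1..m}. \<forall>l\<in>{1..m}. k \<noteq> l \<and> (k, l) \<in> E \<longrightarrow> nle (A l) (B l) (P k l (B k))"
  shows "closed_under_projection m A P B"
  unfolding closed_under_projection_def
proof (intro ballI impI)
  fix i j assume iV: "i \<in> {1..m}" and jV: "j \<in> {1..m}" and ij: "i \<noteq> j"
  have MA: "multi_algebra m A P" using assms(1) by (simp add: tree_multi_algebra_def)
  have at: "anti_tree {1..m} E r" using assms(2) by (simp add: plenary_anti_tree_def)
  obtain Q where Qinv: "\<forall>i\<in>{1..m}. \<forall>j\<in>{1..m}. i \<noteq> j \<longrightarrow> inverse_proj (A i) (A j) (P i j) (Q i j)"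
    and Qpl: "\<forall>i\<in>{1..m}. \<forall>j\<in>{1..m}. i \<noteq> j \<longrightarrow>
             (\<forall>ks s. shortest_oriented_chain E i j ks s \<longrightarrow>
                (\<forall>b\<in>natoms (A i). nle (A j) (chain_map P Q ks s b) (P i j b)))"
    using assms(2) unfolding plenary_anti_tree_def by blast
  have EV: "E \<subseteq> {1..m} \<times> {1..m}" using at by (simp add: anti_tree_def)
  have reach: "(v, r) \<in> E\<^sup>*" if "v \<in> {1..m}" for v
  proof (cases "v = r")
    case True then show ?thesis by simp
  next
    case False
    have "\<exists>!ps. dpath E v r ps" using at that False unfolding anti_tree_def by blast
    then obtain ps where "dpath E v r ps" by (auto dest: ex1_implies_ex)
    then show ?thesis using path_rtrancl[of ps E] by (auto simp: dpath_def)
  qed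
  obtain ks0 where "oriented_chain E r j ks0 0" using down_chain reach[OF jV] by blast
  then obtain ks1 s1 where "oriented_chain E i j ks1 s1" using up_chain reach[OF iV] by blast
  then have "(\<lambda>(ks, s). oriented_chain E i j ks s) (ks1, s1)" by simp
  from ex_has_least_nat[of "\<lambda>(ks, s). oriented_chain E i j ks s", OF this, of "\<lambda>(ks, s). length ks"]
  obtain ks s where oc: "oriented_chain E i j ks s"
    and least: "\<forall>ks' s'. oriented_chain E i j ks' s' \<longrightarrow> length ks \<le> length ks'"
    by fastforce
  have sh: "shortest_oriented_chain E i j ks s" using oc least by (simp add: shortest_oriented_chain_def)
  have up: "\<forall>q<s. (ks ! q, ks ! (q + 1)) \<in> E" and dn: "\<forall>q. s \<le> q \<and> q + 1 < length ks \<longrightarrow> (ks ! (q + 1), ks ! q) \<in> E"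
    and sl: "s < length ks" and h: "ks ! 0 = i" and l: "last ks = j" and ne: "ks \<noteq> []"
    using oc by (auto simp: oriented_chain_def)
  have inV: "ks ! q \<in> {1..m}" if "q < length ks" for q
  proof (cases q)
    case 0 then show ?thesis using h iV by simp
  next
    case (Suc q')
    show ?thesis
    proof (cases "q' < s")
      case True then show ?thesis using up Suc EV by auto
    next
      case False
      then have "(ks ! Suc q', ks ! q') \<in> E" using dn Suc that by auto
      then show ?thesis using Suc EV by blast
    qed
  qed
  have nd: "ks ! q \<noteq> ks ! (q + 1)" if "q + 1 < length ks" for q
    using shortest_no_dup[OF sh that] .
  have NA: "na_algebra (A k)" if "k \<in> {1..m}" for k using MA that by (simp add: multi_algebra_def)
  have BA: "finite_boolean_algebra (A k)" if "k \<in> {1..m}" for k using NA[OF that] by (simp add: na_algebra_def)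
  have Bat: "B k \<in> natoms (A k)" if "k \<in> {1..m}" for k using assms(3) that by (simp add: basic_rel_def)
  have Bc: "B k \<in> ncar (A k)" if "k \<in> {1..m}" for k using atom_car[OF Bat[OF that]] .
  define F where "F = (\<lambda>y p. if p < s then P (ks ! p) (ks ! (p + 1)) y
                  else Q (ks ! (p + 1)) (ks ! p) y)"
  have main: "n < length ks \<longrightarrow> foldl F (B i) [0..<n] \<in> ncar (A (ks ! n)) \<and>
      nle (A (ks ! n)) (B (ks ! n)) (foldl F (B i) [0..<n])" for n
  proof (induction n)
    case 0
    show ?case using h Bc[OF iV] nle_refl[OF BA[OF iV] Bc[OF iV]] by simp
  next
    case (Suc n)
    show ?case
    proof
      assume n: "Suc n < length ks"
      define y where "y = foldl F (B i) [0..<n]"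
      have IH: "y \<in> ncar (A (ks ! n))" "nle (A (ks ! n)) (B (ks ! n)) y"
        using Suc.IH n by (auto simp: y_def)
      have fo: "foldl F (B i) [0..<Suc n] = F y n" by (simp add: y_def)
      have a: "ks ! n \<in> {1..m}" and b: "ks ! (n+1) \<in> {1..m}" and d: "ks ! n \<noteq> ks ! (n+1)"
        using inV n nd by auto
      show "foldl F (B i) [0..<Suc n] \<in> ncar (A (ks ! Suc n)) \<and>
          nle (A (ks ! Suc n)) (B (ks ! Suc n)) (foldl F (B i) [0..<Suc n])"
      proof (cases "n < s")
        case True
        have po: "proj_op (A (ks ! n)) (A (ks ! (n+1))) (P (ks ! n) (ks ! (n+1)))"
          using MA a b d by (simp add: multi_algebra_def)
        have Fy: "F y n = P (ks ! n) (ks ! (n+1)) y" using True by (simp add: F_def)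
        have c1: "P (ks ! n) (ks ! (n+1)) y \<in> ncar (A (ks ! (n+1)))" using po IH(1) by (simp add: proj_op_def)
        have c2: "P (ks ! n) (ks ! (n+1)) (B (ks ! n)) \<in> ncar (A (ks ! (n+1)))"
          using po Bc[OF a] by (simp add: proj_op_def)
        have l1: "nle (A (ks ! (n+1))) (B (ks ! (n+1))) (P (ks ! n) (ks ! (n+1)) (B (ks ! n)))"
          using assms(4) a b d up True by blast
        have l2: "nle (A (ks ! (n+1))) (P (ks ! n) (ks ! (n+1)) (B (ks ! n))) (P (ks ! n) (ks ! (n+1)) y)"
          using proj_mono[OF po Bc[OF a] IH(1) IH(2)] .
        have "nle (A (ks ! (n+1))) (B (ks ! (n+1))) (P (ks ! n) (ks ! (n+1)) y)"
          using nle_trans[OF BA[OF b] Bc[OF b] c2 c1 l1 l2] .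
        then show ?thesis using fo Fy c1 by simp
      next
        case False
        have iv: "inverse_proj (A (ks ! (n+1))) (A (ks ! n)) (P (ks ! (n+1)) (ks ! n)) (Q (ks ! (n+1)) (ks ! n))"
          using Qinv a b d by auto
        then have po: "proj_op (A (ks ! n)) (A (ks ! (n+1))) (Q (ks ! (n+1)) (ks ! n))"
          by (simp add: inverse_proj_def)
        have Fy: "F y n = Q (ks ! (n+1)) (ks ! n) y" using False by (simp add: F_def)
        have c1: "Q (ks ! (n+1)) (ks ! n) y \<in> ncar (A (ks ! (n+1)))" using po IH(1) by (simp add: proj_op_def)
        have c2: "Q (ks ! (n+1)) (ks ! n) (B (ks ! n)) \<in> ncar (A (ks ! (n+1)))"
          using po Bc[OF a] by (simp add: proj_op_def)
        have l0: "nle (A (ks ! n)) (B (ks ! n)) (P (ks ! (n+1)) (ks ! n) (B (ks ! (n+1))))"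
          using assms(4) a b d dn False n by auto
        have l1: "nle (A (ks ! (n+1))) (B (ks ! (n+1))) (Q (ks ! (n+1)) (ks ! n) (B (ks ! n)))"
          using iv l0 Bat[OF a] Bat[OF b] unfolding inverse_proj_def by blast
        have l2: "nle (A (ks ! (n+1))) (Q (ks ! (n+1)) (ks ! n) (B (ks ! n))) (Q (ks ! (n+1)) (ks ! n) y)"
          using proj_mono[OF po Bc[OF a] IH(1) IH(2)] .
        have "nle (A (ks ! (n+1))) (B (ks ! (n+1))) (Q (ks ! (n+1)) (ks ! n) y)"
          using nle_trans[OF BA[OF b] Bc[OF b] c2 c1 l1 l2] .
        then show ?thesis using fo Fy c1 by simp
      qed
    qed
  qed
  have lj: "ks ! (length ks - 1) = j" using l ne by (simp add: last_conv_nth)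
  have cm: "chain_map P Q ks s (B i) = foldl F (B i) [0..<length ks - 1]"
    by (simp add: chain_map_def F_def)
  have M: "chain_map P Q ks s (B i) \<in> ncar (A j)" "nle (A j) (B j) (chain_map P Q ks s (B i))"
    using main[of "length ks - 1"] ne lj cm by auto
  have Pl: "nle (A j) (chain_map P Q ks s (B i)) (P i j (B i))"
    using Qpl iV jV ij sh Bat[OF iV] by blast
  have pij: "proj_op (A i) (A j) (P i j)" using MA iV jV ij by (simp add: multi_algebra_def)
  have Pc: "P i j (B i) \<in> ncar (A j)" using pij Bc[OF iV] by (simp add: proj_op_def)
  show "nle (A j) (B j) (P i j (B i))"
    using nle_trans[OF BA[OF jV] Bc[OF jV] M(1) Pc M(2) Pl] .
qed

end
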